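(* Let $(A,u_A)$ be an irreducible abstract state space. The following are equivalent: (a) $A$ is weakly self-dual and homogeneous; (b) every normalized state $\alpha$ in the interior of $A_+$ is the marginal of an isomorphism state in $A\otimes_{\max}A$, i.e., there is a state $\omega\in A\otimes_{\max}A$ such that $\hat\omega:A^*\to A$ is an order-isomorphism and $\hat\omega(u_A)=\alpha$.
   Context: An abstract state space is a pair $(A,u_A)$ where $A$ is a finite-dimensional real vector space with a closed, pointed, generating convex cone $A_+$, and $u_A$ is an interior point of the dual cone $A^*_+$; a normalized state is $\alpha\in A_+$ with $u_A(\alpha)=1$. $A$ is irreducible if there is no decomposition $A=A_1\oplus A_2$ into nonzero subspaces with $A_+=(A_+\cap A_1)+(A_+\cap A_2)$. An order-isomorphism is a linear bijection $\phi$ with $\phi(x)\ge0$ iff $x\ge0$. $A$ is weakly self-dual if there exists an order-isomorphism $A^*\to A$. $A$ is homogeneous if its group of order-automorphisms acts transitively on the interior of $A_+$. $A\otimes_{\max}A$ is the space of bilinear forms on $A^*\times A^*$ nonnegative on $A^*_+\times A^*_+$; a state is such a form with $\omega(u_A,u_A)=1$; $\hat\omega:A^*\to A$ is $\hat\omega(a)(b)=\omega(a,b)$, and $\hat\omega(u_A)$ is the marginal on the second factor. An isomorphism state is a state $\omega$ with $\hat\omega$ an order-isomorphism. *)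

theory Defs
  imports "HOL-Analysis.Analysis"
begin

text \<open>A finite-dimensional real ordered vector space is modelled as a Euclidean space
  type 'a with a cone K. The dual space A* is identified with 'a via the inner product:
  y represents the functional x \<mapsto> y \<bullet> x.\<close>

definition dual_cone :: "'a::euclidean_space set \<Rightarrow> 'a set" where
  "dual_cone K = {y. \<forall>x\<in>K. 0 \<le> y \<bullet> x}"

definition abstract_state_space :: "'a::euclidean_space set \<Rightarrow> 'a \<Rightarrow> bool" where
  "abstract_state_space K u \<longleftrightarrow>
     closed K \<and> convex K \<and> cone K \<and>
     K \<inter> uminus ` K = {0} \<and>
     {x - y | x y. x \<in> K \<and> y \<in> K} = UNIV \<and>
     u \<in> interior (dual_cone K)"

definition normalized_state :: "'a::euclidean_space set \<Rightarrow> 'a \<Rightarrow> 'a \<Rightarrow> bool" where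
  "normalized_state K u \<alpha> \<longleftrightarrow> \<alpha> \<in> K \<and> u \<bullet> \<alpha> = 1"

definition irreducible_cone :: "'a::euclidean_space set \<Rightarrow> bool" where
  "irreducible_cone K \<longleftrightarrow>
     \<not> (\<exists>A1 A2. subspace A1 \<and> subspace A2 \<and> A1 \<noteq> {0} \<and> A2 \<noteq> {0} \<and>
           A1 \<inter> A2 = {0} \<and> {x + y | x y. x \<in> A1 \<and> y \<in> A2} = UNIV \<and>
           K = {x + y | x y. x \<in> K \<inter> A1 \<and> y \<in> K \<inter> A2})"

definition order_iso :: "'a::euclidean_space set \<Rightarrow> 'a set \<Rightarrow> ('a \<Rightarrow> 'a) \<Rightarrow> bool" where
  "order_iso K1 K2 T \<longleftrightarrow> linear T \<and> bij T \<and> (\<forall>x. T x \<in> K2 \<longleftrightarrow> x \<in> K1)"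

definition weakly_self_dual :: "'a::euclidean_space set \<Rightarrow> bool" where
  "weakly_self_dual K \<longleftrightarrow> (\<exists>T. order_iso (dual_cone K) K T)"

definition homogeneous_cone :: "'a::euclidean_space set \<Rightarrow> bool" where
  "homogeneous_cone K \<longleftrightarrow>
     (\<forall>x\<in>interior K. \<forall>y\<in>interior K. \<exists>T. order_iso K K T \<and> T x = y)"

text \<open>Elements of A \<otimes>_max A: bilinear forms on A* \<times> A*, nonnegative on A*_+ \<times> A*_+.\<close>
definition max_tensor_state :: "'a::euclidean_space set \<Rightarrow> 'a \<Rightarrow> ('a \<Rightarrow> 'a \<Rightarrow> real) \<Rightarrow> bool" where
  "max_tensor_state K u \<omega> \<longleftrightarrow>
     bilinear \<omega> \<and> (\<forall>a\<in>dual_cone K. \<forall>b\<in>dual_cone K. 0 \<le> \<omega> a b) \<and> \<omega> u u = 1"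

text \<open>\<omega>-hat: A* \<rightarrow> A, where \<omega>-hat(a) is the element of A = A** given by b \<mapsto> \<omega> a b.\<close>
definition omega_hat :: "('a::euclidean_space \<Rightarrow> 'a \<Rightarrow> real) \<Rightarrow> 'a \<Rightarrow> 'a" where
  "omega_hat \<omega> a = (\<Sum>b\<in>Basis. \<omega> a b *\<^sub>R b)"

definition isomorphism_state :: "'a::euclidean_space set \<Rightarrow> 'a \<Rightarrow> ('a \<Rightarrow> 'a \<Rightarrow> real) \<Rightarrow> bool" where
  "isomorphism_state K u \<omega> \<longleftrightarrow>
     max_tensor_state K u \<omega> \<and> order_iso (dual_cone K) K (omega_hat \<omega>)"

end

theory Submission
  imports Defs
begin

lemma cone_scale_iff:
  fixes K :: "'a::euclidean_space set"
  assumes "cone K" "c > 0"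
  shows "c *\<^sub>R w \<in> K \<longleftrightarrow> w \<in> K"
proof
  assume "c *\<^sub>R w \<in> K"
  then have "inverse c *\<^sub>R (c *\<^sub>R w) \<in> K" using assms unfolding cone_def
    by (meson inverse_nonnegative_iff_nonnegative less_imp_le)
  then show "w \<in> K" using assms(2) by simp
next
  assume "w \<in> K" then show "c *\<^sub>R w \<in> K" using assms unfolding cone_def by simp
qed

lemma interior_scale:
  fixes K :: "'a::euclidean_space set"
  assumes "cone K" "c > 0" "x \<in> interior K"
  shows "c *\<^sub>R x \<in> interior K"
proof -
  have lin: "linear ((*\<^sub>R) c)" by (simp add: linear_scaleR)
  have inj: "inj ((*\<^sub>R) c :: 'a \<Rightarrow> 'a)" using assms(2) by (simp add: inj_on_def)
  have "(*\<^sub>R) c ` K = K"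
  proof
    show "(*\<^sub>R) c ` K \<subseteq> K" using cone_scale_iff[OF assms(1,2)] by auto
    show "K \<subseteq> (*\<^sub>R) c ` K"
    proof
      fix z assume "z \<in> K"
      then have "inverse c *\<^sub>R z \<in> K" using cone_scale_iff[OF assms(1), of "inverse c"] assms(2)
        by (simp add: cone_scale_iff)
      moreover have "z = c *\<^sub>R (inverse c *\<^sub>R z)" using assms(2) by simp
      ultimately show "z \<in> (*\<^sub>R) c ` K" by blast
    qed
  qed
  then have "interior K = (*\<^sub>R) c ` interior K"
    using interior_injective_linear_image[OF lin inj, of K] by simp
  then show ?thesis using assms(3) by blast
qed

lemma interior_not_zero:
  fixes K :: "'a::euclidean_space set"
  assumes "abstract_state_space K u" "x \<in> interior K"
  shows "x \<noteq> 0"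
proof
  assume x0: "x = 0"
  obtain r where r: "r > 0" "ball 0 r \<subseteq> K" using assms(2) x0 mem_interior by blast
  obtain b :: 'a where b: "b \<in> Basis" using nonempty_Basis by blast
  let ?v = "(r/2) *\<^sub>R b"
  have nb: "norm b = 1" using b by simp
  have "?v \<in> K" "-?v \<in> K" using r nb by (auto simp: subset_iff)
  moreover have "?v = - (- ?v)" by simp
  ultimately have "?v \<in> K \<inter> uminus ` K" by blast
  then have "?v = 0" using assms(1) unfolding abstract_state_space_def by blast
  then show False using r b by auto
qed

lemma interior_pos:
  fixes K :: "'a::euclidean_space set"
  assumes as: "abstract_state_space K u" and x: "x \<in> interior K"
  shows "u \<bullet> x > 0"
proof (rule ccontr)
  assume "\<not> u \<bullet> x > 0"
  moreover have "x \<in> K" using x interior_subset by blast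
  moreover have ud: "u \<in> interior (dual_cone K)" using as unfolding abstract_state_space_def by blast
  ultimately have "u \<bullet> x \<le> 0" "u \<in> dual_cone K" using interior_subset by auto
  obtain e where e: "e > 0" "ball u e \<subseteq> dual_cone K" using ud mem_interior by blast
  have xn: "x \<noteq> 0" using interior_not_zero[OF as x] .
  then have nx: "norm x > 0" by simp
  define y where "y = u - (e / (2 * norm x)) *\<^sub>R x"
  have "dist u y = e/2" using nx e unfolding y_def dist_norm by simp
  then have "y \<in> dual_cone K" using e by auto
  then have "0 \<le> y \<bullet> x" using \<open>x \<in> K\<close> unfolding dual_cone_def by auto
  moreover have "y \<bullet> x = u \<bullet> x - (e / (2 * norm x)) * (x \<bullet> x)"
    unfolding y_def by (simp add: inner_diff_left)
  moreover have "(e / (2 * norm x)) * (x \<bullet> x) > 0" using e nx xn by simp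
  ultimately show False using \<open>u \<bullet> x \<le> 0\<close> by linarith
qed

lemma interior_nonempty:
  fixes K :: "'a::euclidean_space set"
  assumes as: "abstract_state_space K u"
  shows "interior K \<noteq> {}"
proof -
  have cv: "convex K" and gen: "{x - y | x y. x \<in> K \<and> y \<in> K} = UNIV"
    and pt: "K \<inter> uminus ` K = {0}"
    using as unfolding abstract_state_space_def by auto
  have K0: "0 \<in> K" using pt by blast
  have "K \<subseteq> affine hull K" by (rule hull_subset)
  then have "0 \<in> affine hull K" using K0 by (rule subsetD)
  then have ah: "affine hull K = span K" by (rule affine_hull_span_0)
  have sp: "span K = UNIV"
  proof -
    { fix z :: 'a
      have "z \<in> {x - y | x y. x \<in> K \<and> y \<in> K}" using gen by simp
      then obtain x y where xy: "z = x - y" "x \<in> K" "y \<in> K" by blast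
      have "x \<in> span K" using xy(2) by (rule span_base)
      moreover have "y \<in> span K" using xy(3) by (rule span_base)
      ultimately have "x - y \<in> span K" by (rule span_diff)
      then have "z \<in> span K" using xy(1) by simp }
    then show ?thesis by blast
  qed
  have "affine hull K = UNIV" using ah sp by simp
  then have ri: "rel_interior K = interior K" by (rule rel_interior_interior)
  have "K \<noteq> {}" using K0 by blast
  then have "rel_interior K \<noteq> {}" using rel_interior_eq_empty[OF cv] by simp
  then show ?thesis using ri by simp
qed

lemma omega_hat_inner:
  fixes \<psi> :: "'a::euclidean_space \<Rightarrow> 'a"
  shows "omega_hat (\<lambda>a b. b \<bullet> \<psi> a) = \<psi>"
  unfolding omega_hat_def
proof (rule ext)
  fix a
  have "(\<Sum>b\<in>Basis. (b \<bullet> \<psi> a) *\<^sub>R b) = (\<Sum>b\<in>Basis. (\<psi> a \<bullet> b) *\<^sub>R b)"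
    by (rule sum.cong) (auto simp: inner_commute)
  also have "\<dots> = \<psi> a" by (rule euclidean_representation)
  finally show "(\<Sum>b\<in>Basis. (b \<bullet> \<psi> a) *\<^sub>R b) = \<psi> a" .
qed

theorem corollary4p2:
  fixes K :: "'a::euclidean_space set" and u :: 'a
  assumes "abstract_state_space K u"
    and "irreducible_cone K"
  shows "(weakly_self_dual K \<and> homogeneous_cone K) \<longleftrightarrow>
         (\<forall>\<alpha>. normalized_state K u \<alpha> \<and> \<alpha> \<in> interior K \<longrightarrow>
              (\<exists>\<omega>. isomorphism_state K u \<omega> \<and> omega_hat \<omega> u = \<alpha>))"
proof
  assume "weakly_self_dual K \<and> homogeneous_cone K"
  then obtain \<phi> where phi: "order_iso (dual_cone K) K \<phi>" and hom: "homogeneous_cone K"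
    unfolding weakly_self_dual_def by blast
  have lphi: "linear \<phi>" and bphi: "bij \<phi>" and mphi: "\<And>x. \<phi> x \<in> K \<longleftrightarrow> x \<in> dual_cone K"
    using phi unfolding order_iso_def by auto
  have img: "\<phi> ` dual_cone K = K"
  proof
    show "\<phi> ` dual_cone K \<subseteq> K" using mphi by auto
    show "K \<subseteq> \<phi> ` dual_cone K"
    proof
      fix z assume z: "z \<in> K"
      obtain w where "z = \<phi> w" using bphi by (metis bij_pointE)
      then show "z \<in> \<phi> ` dual_cone K" using z mphi by blast
    qed
  qed
  have ud: "u \<in> interior (dual_cone K)" using assms(1) unfolding abstract_state_space_def by blast
  have "interior K = \<phi> ` interior (dual_cone K)"
    using interior_injective_linear_image[OF lphi bij_is_inj[OF bphi], of "dual_cone K"] img by simp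
  then have phiu: "\<phi> u \<in> interior K" using ud by blast
  show "\<forall>\<alpha>. normalized_state K u \<alpha> \<and> \<alpha> \<in> interior K \<longrightarrow>
              (\<exists>\<omega>. isomorphism_state K u \<omega> \<and> omega_hat \<omega> u = \<alpha>)"
  proof (intro allI impI)
    fix \<alpha> assume a: "normalized_state K u \<alpha> \<and> \<alpha> \<in> interior K"
    then obtain g where g: "order_iso K K g" "g (\<phi> u) = \<alpha>"
      using hom phiu unfolding homogeneous_cone_def by blast
    have lg: "linear g" and bg: "bij g" and mg: "\<And>x. g x \<in> K \<longleftrightarrow> x \<in> K"
      using g(1) unfolding order_iso_def by auto
    define \<psi> where "\<psi> = g \<circ> \<phi>"
    have lpsi: "linear \<psi>" unfolding \<psi>_def using lg lphi by (simp add: linear_compose)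
    have bpsi: "bij \<psi>" unfolding \<psi>_def using bg bphi by (simp add: bij_comp)
    have mpsi: "\<And>x. \<psi> x \<in> K \<longleftrightarrow> x \<in> dual_cone K" unfolding \<psi>_def using mg mphi by simp
    define \<omega> where "\<omega> = (\<lambda>a b. b \<bullet> \<psi> a)"
    have oh: "omega_hat \<omega> = \<psi>" unfolding \<omega>_def by (rule omega_hat_inner)
    have bil: "bilinear \<omega>"
      unfolding bilinear_def \<omega>_def
    proof (intro allI conjI)
      fix x show "linear (\<lambda>y. y \<bullet> \<psi> x)" by (rule bounded_linear.linear[OF bounded_linear_inner_left])
    next
      fix y show "linear (\<lambda>x. y \<bullet> \<psi> x)"
        using linear_compose[OF lpsi bounded_linear.linear[OF bounded_linear_inner_right[of y]]] by (simp add: o_def)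
    qed
    have pos: "\<forall>a\<in>dual_cone K. \<forall>b\<in>dual_cone K. 0 \<le> \<omega> a b"
      unfolding \<omega>_def using mpsi unfolding dual_cone_def by blast
    have "\<psi> u = \<alpha>" unfolding \<psi>_def using g(2) by simp
    then have uu: "\<omega> u u = 1" using a unfolding \<omega>_def normalized_state_def by simp
    have "isomorphism_state K u \<omega>"
      unfolding isomorphism_state_def max_tensor_state_def order_iso_def oh
      using bil pos uu lpsi bpsi mpsi by blast
    then show "\<exists>\<omega>. isomorphism_state K u \<omega> \<and> omega_hat \<omega> u = \<alpha>"
      using oh \<open>\<psi> u = \<alpha>\<close> by blast
  qed
next
  assume H: "\<forall>\<alpha>. normalized_state K u \<alpha> \<and> \<alpha> \<in> interior K \<longrightarrow>
              (\<exists>\<omega>. isomorphism_state K u \<omega> \<and> omega_hat \<omega> u = \<alpha>)"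
  have cn: "cone K" using assms(1) unfolding abstract_state_space_def by blast
  have norm_ok: "\<exists>\<psi>. order_iso (dual_cone K) K \<psi> \<and> \<psi> u = inverse (u \<bullet> x) *\<^sub>R x"
    if x: "x \<in> interior K" for x
  proof -
    have p: "u \<bullet> x > 0" using interior_pos[OF assms(1) x] .
    let ?a = "inverse (u \<bullet> x) *\<^sub>R x"
    have "?a \<in> interior K" using interior_scale[OF cn _ x] p by simp
    moreover have "u \<bullet> ?a = 1" using p by simp
    ultimately have "normalized_state K u ?a \<and> ?a \<in> interior K"
      unfolding normalized_state_def using interior_subset by blast
    then obtain \<omega> where "isomorphism_state K u \<omega>" "omega_hat \<omega> u = ?a" using H by blast
    then show ?thesis unfolding isomorphism_state_def by blast
  qed
  have wsd: "weakly_self_dual K"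
  proof -
    obtain x where "x \<in> interior K" using interior_nonempty[OF assms(1)] by blast
    then show ?thesis using norm_ok unfolding weakly_self_dual_def by blast
  qed
  have "homogeneous_cone K"
    unfolding homogeneous_cone_def
  proof (intro ballI)
    fix x y assume x: "x \<in> interior K" and y: "y \<in> interior K"
    define s where "s = u \<bullet> x"
    define t where "t = u \<bullet> y"
    have s: "s > 0" unfolding s_def using interior_pos[OF assms(1) x] .
    have t: "t > 0" unfolding t_def using interior_pos[OF assms(1) y] .
    obtain \<psi>1 where p1: "order_iso (dual_cone K) K \<psi>1" "\<psi>1 u = inverse s *\<^sub>R x"
      using norm_ok[OF x] unfolding s_def by blast
    obtain \<psi>2 where p2: "order_iso (dual_cone K) K \<psi>2" "\<psi>2 u = inverse t *\<^sub>R y"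
      using norm_ok[OF y] unfolding t_def by blast
    have l1: "linear \<psi>1" and b1: "bij \<psi>1" and m1: "\<And>z. \<psi>1 z \<in> K \<longleftrightarrow> z \<in> dual_cone K"
      using p1(1) unfolding order_iso_def by auto
    have l2: "linear \<psi>2" and b2: "bij \<psi>2" and m2: "\<And>z. \<psi>2 z \<in> K \<longleftrightarrow> z \<in> dual_cone K"
      using p2(1) unfolding order_iso_def by auto
    define c where "c = t / s"
    have c: "c > 0" unfolding c_def using s t by simp
    define T where "T = (\<lambda>z. c *\<^sub>R \<psi>2 (inv \<psi>1 z))"
    have li: "linear (inv \<psi>1)" using l1 b1 by (simp add: bij_is_inj inj_linear_imp_inv_linear)
    have lT: "linear T" unfolding T_def
      using linear_compose[OF linear_compose[OF li l2] linear_scaleR[of c]] by (simp add: o_def)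
    have bT: "bij T"
    proof -
      have "bij ((*\<^sub>R) c :: 'a \<Rightarrow> 'a)"
      proof (rule bijI)
        show "inj ((*\<^sub>R) c :: 'a \<Rightarrow> 'a)" using c by (simp add: inj_on_def)
        show "surj ((*\<^sub>R) c :: 'a \<Rightarrow> 'a)"
        proof (rule surjI)
          fix z :: 'a show "c *\<^sub>R (inverse c *\<^sub>R z) = z" using c by simp
        qed
      qed
      moreover have "bij (inv \<psi>1)" using b1 by (rule bij_imp_bij_inv)
      ultimately have "bij ((*\<^sub>R) c \<circ> \<psi>2 \<circ> inv \<psi>1)" using b2 by (simp add: bij_comp)
      then show ?thesis unfolding T_def by (simp add: o_def)
    qed
    have mT: "\<forall>z. T z \<in> K \<longleftrightarrow> z \<in> K"
    proof
      fix z
      have "T z \<in> K \<longleftrightarrow> \<psi>2 (inv \<psi>1 z) \<in> K" unfolding T_def using cone_scale_iff[OF cn c] .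
      also have "\<dots> \<longleftrightarrow> inv \<psi>1 z \<in> dual_cone K" using m2 .
      also have "\<dots> \<longleftrightarrow> \<psi>1 (inv \<psi>1 z) \<in> K" using m1 by simp
      also have "\<psi>1 (inv \<psi>1 z) = z" using b1 by (simp add: bij_is_surj surj_f_inv_f)
      finally show "T z \<in> K \<longleftrightarrow> z \<in> K" .
    qed
    have "\<psi>1 (s *\<^sub>R u) = x" using l1 p1(2) s by (simp add: linear_cmul)
    then have "inv \<psi>1 x = s *\<^sub>R u" using b1 by (metis bij_is_inj inv_f_f)
    then have "T x = c *\<^sub>R (s *\<^sub>R \<psi>2 u)" unfolding T_def using l2 by (simp add: linear_cmul)
    also have "\<dots> = y" using p2(2) s t unfolding c_def by simp
    finally have "T x = y" .
    then show "\<exists>T. order_iso K K T \<and> T x = y" unfolding order_iso_def using lT bT mT by blast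
  qed
  then show "weakly_self_dual K \<and> homogeneous_cone K" using wsd by blast
qed

end
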